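(* Let $\gamma: I \to M$ be a unit speed curve on a smooth oriented surface $M\subset E^3$ with Darboux frame $\{T,V,U\}$, nowhere-vanishing normal curvature $k_n$, geodesic curvature $k_g$ and geodesic torsion $\tau_g$, and suppose the position vector of $\gamma$ always lies in the plane spanned by $\{T, V\}$, i.e. $\gamma(s) = \mu_1(s)T(s) + \mu_2(s)V(s)$ for differentiable functions $\mu_1,\mu_2$. Then $\gamma$ is an isophotic curve if and only if the function $$s\mapsto \frac{k_n^2}{(k_n^2+\tau_g^2)^{3/2}}\, e^{-\int \frac{\tau_g k_g}{k_n}\, ds}$$ is constant.
   Context: For a unit speed curve $\gamma$ on an oriented surface $M\subset E^3$, the Darboux frame is $T=\gamma'$, $U$ = unit normal of $M$ along $\gamma$, $V = U\times T$, satisfying $T' = k_g V + k_n U$, $V' = -k_g T + \tau_g U$, $U' = -k_n T - \tau_g V$; here $k_g$, $k_n$, $\tau_g$ are the geodesic curvature, normal curvature and geodesic torsion. The curve $\gamma$ is an isophotic curve if there is a fixed unit vector $d$ and a constant angle $\phi$ with $\langle U, d\rangle = \cos\phi$ along $\gamma$. $\int\cdot\,ds$ denotes an antiderivative. *)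

theory Defs
  imports "HOL-Analysis.Analysis" "HOL-Analysis.Cross3"
begin

definition isophotic :: "real set \<Rightarrow> (real \<Rightarrow> real^3) \<Rightarrow> bool" where
  "isophotic I U \<longleftrightarrow> (\<exists>(d::real^3) (\<phi>::real). norm d = 1 \<and> (\<forall>s\<in>I. U s \<bullet> d = cos \<phi>))"

end

theory Submission
  imports Defs
begin

lemma inner_vd:
  fixes f g :: "real \<Rightarrow> 'a::real_inner"
  assumes "(f has_vector_derivative f') (at s)" "(g has_vector_derivative g') (at s)"
  shows "((\<lambda>t. f t \<bullet> g t) has_real_derivative (f s \<bullet> g' + f' \<bullet> g s)) (at s)"
proof -
  have "((\<lambda>t. f t \<bullet> g t) has_derivative (\<lambda>h. f s \<bullet> (h *\<^sub>R g') + (h *\<^sub>R f') \<bullet> g s)) (at s)"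
    using has_derivative_inner[OF assms(1)[unfolded has_vector_derivative_def] assms(2)[unfolded has_vector_derivative_def]] .
  then show ?thesis unfolding has_field_derivative_def
    by (rule has_derivative_eq_rhs) (auto simp: algebra_simps)
qed

lemma frame_zero:
  fixes w T U :: "real^3"
  assumes "norm T = 1" "norm U = 1" "U \<bullet> T = 0" "w \<bullet> T = 0" "w \<bullet> U = 0" "w \<bullet> cross3 U T = 0"
  shows "w = 0"
proof -
  have "cross3 w (cross3 U T) = 0" using assms by (simp add: Lagrange)
  moreover have "norm (cross3 U T) = 1"
    using norm_cross_dot[of U T] assms norm_ge_zero[of "cross3 U T"] by (simp add: power2_eq_1_iff)
  ultimately show ?thesis using norm_cross_dot[of w "cross3 U T"] assms by simp
qed

lemma frame_parseval:
  fixes d T U :: "real^3"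
  assumes "norm T = 1" "norm U = 1" "U \<bullet> T = 0"
  shows "d \<bullet> d = (d \<bullet> T)^2 + (d \<bullet> cross3 U T)^2 + (d \<bullet> U)^2"
proof -
  let ?V = "cross3 U T"
  have VV: "?V \<bullet> ?V = 1" using norm_cross_dot[of U T] assms by (simp add: power2_norm_eq_inner[symmetric])
  have TT: "T \<bullet> T = 1" "U \<bullet> U = 1" using assms by (simp_all add: norm_eq_1)
  have o: "?V \<bullet> T = 0" "?V \<bullet> U = 0" "T \<bullet> ?V = 0" "U \<bullet> ?V = 0" "T \<bullet> U = 0"
    using dot_cross_self[of U T] dot_cross_self[of T U] assms by (auto simp: inner_commute)
  let ?w = "d - (d \<bullet> T) *\<^sub>R T - (d \<bullet> ?V) *\<^sub>R ?V - (d \<bullet> U) *\<^sub>R U"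
  have "?w = 0"
    by (rule frame_zero[OF assms]) (simp_all add: inner_diff_left inner_diff_right VV TT o inner_commute)
  then have d: "d = (d \<bullet> T) *\<^sub>R T + (d \<bullet> ?V) *\<^sub>R ?V + (d \<bullet> U) *\<^sub>R U"
    by (simp add: algebra_simps)
  have "d \<bullet> d = ((d \<bullet> T) *\<^sub>R T + (d \<bullet> ?V) *\<^sub>R ?V + (d \<bullet> U) *\<^sub>R U) \<bullet> ((d \<bullet> T) *\<^sub>R T + (d \<bullet> ?V) *\<^sub>R ?V + (d \<bullet> U) *\<^sub>R U)"
    using d by metis
  also have "\<dots> = (d \<bullet> T)^2 + (d \<bullet> ?V)^2 + (d \<bullet> U)^2"
    by (simp add: inner_add_left inner_add_right VV TT o power2_eq_square assms)
  finally show ?thesis .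
qed

theorem theorem4p2:
  fixes I :: "real set"
    and \<gamma> T V U :: "real \<Rightarrow> real^3"
    and kg kn \<tau>g \<mu>1 \<mu>2 F :: "real \<Rightarrow> real"
  assumes I: "open I" "is_interval I" "I \<noteq> {}"
    and unit_speed: "\<And>s. s \<in> I \<Longrightarrow> (\<gamma> has_vector_derivative T s) (at s)"
                    "\<And>s. s \<in> I \<Longrightarrow> norm (T s) = 1"
    and normal: "\<And>s. s \<in> I \<Longrightarrow> norm (U s) = 1" "\<And>s. s \<in> I \<Longrightarrow> U s \<bullet> T s = 0"
    and Vdef: "\<And>s. s \<in> I \<Longrightarrow> V s = cross3 (U s) (T s)"
    and dT: "\<And>s. s \<in> I \<Longrightarrow> (T has_vector_derivative (kg s *\<^sub>R V s + kn s *\<^sub>R U s)) (at s)"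
    and dV: "\<And>s. s \<in> I \<Longrightarrow> (V has_vector_derivative (- kg s *\<^sub>R T s + \<tau>g s *\<^sub>R U s)) (at s)"
    and dU: "\<And>s. s \<in> I \<Longrightarrow> (U has_vector_derivative (- kn s *\<^sub>R T s - \<tau>g s *\<^sub>R V s)) (at s)"
    and curv_diff: "kg differentiable_on I" "kn differentiable_on I" "\<tau>g differentiable_on I"
    and kn_nz: "\<And>s. s \<in> I \<Longrightarrow> kn s \<noteq> 0"
    and mu_diff: "\<mu>1 differentiable_on I" "\<mu>2 differentiable_on I"
    and position: "\<And>s. s \<in> I \<Longrightarrow> \<gamma> s = \<mu>1 s *\<^sub>R T s + \<mu>2 s *\<^sub>R V s"
    and F: "\<And>s. s \<in> I \<Longrightarrow> (F has_real_derivative (\<tau>g s * kg s / kn s)) (at s)"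
  shows "isophotic I U \<longleftrightarrow>
    (\<exists>c. \<forall>s\<in>I. (kn s)\<^sup>2 / ((kn s)\<^sup>2 + (\<tau>g s)\<^sup>2) powr (3/2) * exp (- F s) = c)"
proof -
  have cvx: "convex I" using I(2) by (rule is_interval_convex)
  have fr: "T s \<bullet> T s = 1" "U s \<bullet> U s = 1" "V s \<bullet> V s = 1" "T s \<bullet> U s = 0" "U s \<bullet> T s = 0"
     "T s \<bullet> V s = 0" "V s \<bullet> T s = 0" "U s \<bullet> V s = 0" "V s \<bullet> U s = 0" if s: "s \<in> I" for s
  proof -
    have VV: "V s \<bullet> V s = 1" using norm_cross_dot[of "U s" "T s"] normal[OF s] unit_speed(2)[OF s] Vdef[OF s]
      by (simp add: power2_norm_eq_inner[symmetric] power2_eq_1_iff)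
    show "T s \<bullet> T s = 1" "U s \<bullet> U s = 1" "V s \<bullet> V s = 1" "T s \<bullet> U s = 0" "U s \<bullet> T s = 0"
     "T s \<bullet> V s = 0" "V s \<bullet> T s = 0" "U s \<bullet> V s = 0" "V s \<bullet> U s = 0"
      using VV normal[OF s] unit_speed(2)[OF s] Vdef[OF s] dot_cross_self[of "U s" "T s"]
      by (auto simp: norm_eq_1 inner_commute)
  qed
  have gT: "\<gamma> s \<bullet> T s = \<mu>1 s" and gV: "\<gamma> s \<bullet> V s = \<mu>2 s" and gU: "\<gamma> s \<bullet> U s = 0" if s: "s \<in> I" for s
    using fr[OF s] position[OF s] by (auto simp: inner_add_left)
  have dmu1: "(\<mu>1 has_real_derivative (kg s * \<mu>2 s + 1)) (at s)" if s: "s \<in> I" for s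
  proof -
    have "((\<lambda>t. \<gamma> t \<bullet> T t) has_real_derivative (\<gamma> s \<bullet> (kg s *\<^sub>R V s + kn s *\<^sub>R U s) + T s \<bullet> T s)) (at s)"
      by (rule inner_vd[OF unit_speed(1)[OF s] dT[OF s]])
    then have "((\<lambda>t. \<gamma> t \<bullet> T t) has_real_derivative (kg s * \<mu>2 s + 1)) (at s)"
      using fr[OF s] gV[OF s] gU[OF s] by (simp add: inner_add_right)
    then show ?thesis by (rule has_field_derivative_transform_within_open[OF _ I(1) s]) (simp add: gT)
  qed
  have dmu2: "(\<mu>2 has_real_derivative (- kg s * \<mu>1 s)) (at s)" if s: "s \<in> I" for s
  proof -
    have "((\<lambda>t. \<gamma> t \<bullet> V t) has_real_derivative (\<gamma> s \<bullet> (- kg s *\<^sub>R T s + \<tau>g s *\<^sub>R U s) + T s \<bullet> V s)) (at s)"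
      by (rule inner_vd[OF unit_speed(1)[OF s] dV[OF s]])
    then have "((\<lambda>t. \<gamma> t \<bullet> V t) has_real_derivative (- kg s * \<mu>1 s)) (at s)"
      using fr[OF s] gT[OF s] gU[OF s] by (simp add: inner_add_right inner_diff_right)
    then show ?thesis by (rule has_field_derivative_transform_within_open[OF _ I(1) s]) (simp add: gV)
  qed
  have E3: "kn s * \<mu>1 s + \<tau>g s * \<mu>2 s = 0" if s: "s \<in> I" for s
  proof -
    have "((\<lambda>t. \<gamma> t \<bullet> U t) has_real_derivative (\<gamma> s \<bullet> (- kn s *\<^sub>R T s - \<tau>g s *\<^sub>R V s) + T s \<bullet> U s)) (at s)"
      by (rule inner_vd[OF unit_speed(1)[OF s] dU[OF s]])
    then have "((\<lambda>t. \<gamma> t \<bullet> U t) has_real_derivative (- kn s * \<mu>1 s - \<tau>g s * \<mu>2 s)) (at s)"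
      using fr[OF s] gT[OF s] gV[OF s] by (simp add: inner_diff_right)
    then have "((\<lambda>t. 0) has_real_derivative (- kn s * \<mu>1 s - \<tau>g s * \<mu>2 s)) (at s)"
      by (rule has_field_derivative_transform_within_open[OF _ I(1) s]) (simp add: gU)
    then have "- kn s * \<mu>1 s - \<tau>g s * \<mu>2 s = 0" using DERIV_const DERIV_unique by blast
    then show ?thesis by simp
  qed
  have "\<exists>K. \<forall>s\<in>I. \<mu>2 s * exp (- F s) = K"
  proof (rule has_field_derivative_zero_constant[OF cvx])
    fix s assume s: "s \<in> I"
    have "((\<lambda>t. \<mu>2 t * exp (- F t)) has_real_derivative
        (- kg s * \<mu>1 s) * exp (- F s) + \<mu>2 s * (exp (- F s) * (- (\<tau>g s * kg s / kn s)))) (at s)"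
    proof -
      have e: "((\<lambda>t. exp (- F t)) has_real_derivative exp (- F s) * (- (\<tau>g s * kg s / kn s))) (at s)"
        by (rule DERIV_chain2[OF DERIV_exp DERIV_minus[OF F[OF s]]])
      show ?thesis using DERIV_mult[OF dmu2[OF s] e] by (simp add: algebra_simps)
    qed
    moreover have "(- kg s * \<mu>1 s) * exp (- F s) + \<mu>2 s * (exp (- F s) * (- (\<tau>g s * kg s / kn s))) = 0"
    proof -
      have "(- kg s * \<mu>1 s) * exp (- F s) + \<mu>2 s * (exp (- F s) * (- (\<tau>g s * kg s / kn s)))
          = - kg s * exp (- F s) * (kn s * \<mu>1 s + \<tau>g s * \<mu>2 s) / kn s"
        using kn_nz[OF s] by (simp add: field_simps)
      also have "\<dots> = 0" using E3[OF s] by simp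
      finally show ?thesis .
    qed
    ultimately show "((\<lambda>t. \<mu>2 t * exp (- F t)) has_real_derivative 0) (at s within I)"
      by (simp add: has_field_derivative_at_within)
  qed
  then obtain K where K: "\<And>s. s \<in> I \<Longrightarrow> \<mu>2 s * exp (- F s) = K" by blast
  have K0: "K \<noteq> 0"
  proof
    assume "K = 0"
    then have m2: "\<mu>2 s = 0" if "s \<in> I" for s using K[OF that] by simp
    have g0: "\<gamma> s = 0" if s: "s \<in> I" for s
      using position[OF s] m2[OF s] E3[OF s] kn_nz[OF s] by simp
    obtain s0 where s0: "s0 \<in> I" using I(3) by blast
    have "((\<lambda>t. 0) has_vector_derivative T s0) (at s0)"
      by (rule has_vector_derivative_transform_within_open[OF unit_speed(1)[OF s0] I(1) s0]) (simp add: g0)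
    then have "T s0 = 0" using vector_derivative_unique_at has_vector_derivative_const by metis
    then show False using unit_speed(2)[OF s0] by simp
  qed
  define R where "R s = (kn s)\<^sup>2 + (\<tau>g s)\<^sup>2" for s
  define Q where "Q s = (kn s)\<^sup>2 / ((kn s)\<^sup>2 + (\<tau>g s)\<^sup>2) powr (3/2) * exp (- F s)" for s
  define X where "X s = (\<mu>2 s)\<^sup>2 * (R s)^3 / (kn s)^4" for s
  have m2nz: "\<mu>2 s \<noteq> 0" if s: "s \<in> I" for s using K[OF s] K0 by auto
  have Rpos: "R s > 0" if s: "s \<in> I" for s using kn_nz[OF s] unfolding R_def
    by (simp add: add_pos_nonneg)
  have mu1: "\<mu>1 s = - \<tau>g s * \<mu>2 s / kn s" if s: "s \<in> I" for s
    using E3[OF s] kn_nz[OF s] by (simp add: field_simps)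
  have Xpos: "X s > 0" if s: "s \<in> I" for s
    using Rpos[OF s] m2nz[OF s] kn_nz[OF s] unfolding X_def by simp
  have Qpos: "Q s > 0" if s: "s \<in> I" for s
    using Rpos[OF s] kn_nz[OF s] unfolding Q_def R_def[symmetric] by simp
  have QX: "(Q s)\<^sup>2 * X s = K\<^sup>2" if s: "s \<in> I" for s
  proof -
    have P2: "(R s powr (3/2))\<^sup>2 = (R s)^3"
    proof -
      have "(R s powr (3/2))\<^sup>2 = R s powr (3/2 * 2)"
        using Rpos[OF s] by (simp add: powr_powr[symmetric] power2_eq_square powr_add[symmetric])
      also have "\<dots> = (R s)^3" using Rpos[OF s] by simp
      finally show ?thesis .
    qed
    have "(Q s)\<^sup>2 * X s = (kn s)^4 / (R s)^3 * (exp (- F s))\<^sup>2 * ((\<mu>2 s)\<^sup>2 * (R s)^3 / (kn s)^4)"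
      unfolding Q_def X_def R_def[symmetric] using P2 by (simp add: power_mult_distrib power_divide)
    also have "\<dots> = (\<mu>2 s * exp (- F s))\<^sup>2"
      using Rpos[OF s] kn_nz[OF s] by (simp add: field_simps power_mult_distrib)
    finally show ?thesis using K[OF s] by simp
  qed
  have Qeq: "(\<forall>s\<in>I. (kn s)\<^sup>2 / ((kn s)\<^sup>2 + (\<tau>g s)\<^sup>2) powr (3/2) * exp (- F s) = c) \<longleftrightarrow> (\<forall>s\<in>I. Q s = c)" for c
    unfolding Q_def by simp
  show ?thesis unfolding Qeq
  proof
    assume "isophotic I U"
    then obtain d \<phi> where d1: "norm d = 1" and dUc: "\<And>s. s \<in> I \<Longrightarrow> U s \<bullet> d = cos \<phi>"
      unfolding isophotic_def by blast
    define c where "c = cos \<phi>"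
    have Xc: "c\<^sup>2 * (1 + X s) = 1" if s: "s \<in> I" for s
    proof -
      define a where "a t = d \<bullet> T t" for t
      define b where "b t = d \<bullet> V t" for t
      have dc: "d \<bullet> U t = c" if "t \<in> I" for t using dUc[OF that] by (simp add: inner_commute c_def)
      have da: "(a has_real_derivative (kg t * b t + kn t * c)) (at t)" if t: "t \<in> I" for t
        using inner_vd[OF has_vector_derivative_const dT[OF t], of d] dc[OF t]
        unfolding a_def b_def by (simp add: inner_add_right)
      have db: "(b has_real_derivative (- kg t * a t + \<tau>g t * c)) (at t)" if t: "t \<in> I" for t
        using inner_vd[OF has_vector_derivative_const dV[OF t], of d] dc[OF t]
        unfolding a_def b_def by (simp add: inner_add_right inner_diff_right algebra_simps)
      have A: "kn t * a t + \<tau>g t * b t = 0" if t: "t \<in> I" for t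
      proof -
        have "((\<lambda>t. d \<bullet> U t) has_real_derivative (- kn t * a t - \<tau>g t * b t)) (at t)"
          using inner_vd[OF has_vector_derivative_const dU[OF t], of d]
          unfolding a_def b_def by (simp add: inner_diff_right)
        then have "((\<lambda>t. c) has_real_derivative (- kn t * a t - \<tau>g t * b t)) (at t)"
          by (rule has_field_derivative_transform_within_open[OF _ I(1) t]) (simp add: dc)
        then have "- kn t * a t - \<tau>g t * b t = 0" using DERIV_const DERIV_unique by blast
        then show ?thesis by simp
      qed
      have w0: "a t * \<mu>2 t - b t * \<mu>1 t = 0" if t: "t \<in> I" for t
      proof -
        have "kn t * (a t * \<mu>2 t - b t * \<mu>1 t) = (kn t * a t) * \<mu>2 t - b t * (kn t * \<mu>1 t)"
          by (simp add: algebra_simps)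
        also have "\<dots> = 0" using A[OF t] E3[OF t]
          by (simp add: algebra_simps eq_neg_iff_add_eq_0[symmetric])
        finally show ?thesis using kn_nz[OF t] by simp
      qed
      have "((\<lambda>t. a t * \<mu>2 t - b t * \<mu>1 t) has_real_derivative
          ((kg s * b s + kn s * c) * \<mu>2 s + (- kg s * \<mu>1 s) * a s
           - ((- kg s * a s + \<tau>g s * c) * \<mu>1 s + (kg s * \<mu>2 s + 1) * b s))) (at s)"
        by (intro DERIV_diff DERIV_mult da[OF s] db[OF s] dmu1[OF s] dmu2[OF s])
      then have "((\<lambda>t. 0) has_real_derivative
          ((kg s * b s + kn s * c) * \<mu>2 s + (- kg s * \<mu>1 s) * a s
           - ((- kg s * a s + \<tau>g s * c) * \<mu>1 s + (kg s * \<mu>2 s + 1) * b s))) (at s)"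
        by (rule has_field_derivative_transform_within_open[OF _ I(1) s]) (simp add: w0)
      then have "(kg s * b s + kn s * c) * \<mu>2 s + (- kg s * \<mu>1 s) * a s
           - ((- kg s * a s + \<tau>g s * c) * \<mu>1 s + (kg s * \<mu>2 s + 1) * b s) = 0"
        using DERIV_const DERIV_unique by blast
      then have bv: "b s = c * (kn s * \<mu>2 s - \<tau>g s * \<mu>1 s)" by (simp add: algebra_simps)
      have pars: "1 = (a s)\<^sup>2 + (b s)\<^sup>2 + c\<^sup>2"
        using frame_parseval[of "T s" "U s" d] unit_speed(2)[OF s] normal[OF s] d1 dc[OF s]
        unfolding a_def b_def Vdef[OF s] by (simp add: norm_eq_1)
      have av: "a s = - \<tau>g s * b s / kn s" using A[OF s] kn_nz[OF s] by (simp add: field_simps)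
      have bv2: "b s = c * \<mu>2 s * R s / kn s"
        using bv mu1[OF s] kn_nz[OF s] unfolding R_def by (simp add: field_simps power2_eq_square)
      have "(a s)\<^sup>2 + (b s)\<^sup>2 = (b s)\<^sup>2 * R s / (kn s)\<^sup>2"
        unfolding av R_def using kn_nz[OF s] by (simp add: field_simps power2_eq_square)
      also have "\<dots> = c\<^sup>2 * X s"
        unfolding bv2 X_def using kn_nz[OF s] by (simp add: field_simps eval_nat_numeral)
      finally show ?thesis using pars by (simp add: algebra_simps)
    qed
    obtain s0 where s0: "s0 \<in> I" using I(3) by blast
    show "\<exists>q. \<forall>s\<in>I. Q s = q"
    proof (intro exI ballI)
      fix s assume s: "s \<in> I"
      have "X s = X s0" using Xc[OF s] Xc[OF s0]
        by (metis mult_cancel_left mult_zero_left zero_neq_one add_left_cancel)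
      then have "(Q s)\<^sup>2 = (Q s0)\<^sup>2" using QX[OF s] QX[OF s0] Xpos[OF s] Xpos[OF s0]
        by (metis nonzero_mult_div_cancel_right less_irrefl)
      then show "Q s = Q s0" using Qpos[OF s] Qpos[OF s0] by (simp add: power2_eq_iff_nonneg)
    qed
  next
    assume "\<exists>q. \<forall>s\<in>I. Q s = q"
    then obtain q where hq: "\<And>s. s \<in> I \<Longrightarrow> Q s = q" by blast
    obtain s0 where s0: "s0 \<in> I" using I(3) by blast
    define X0 where "X0 = X s0"
    have X0pos: "X0 > 0" using Xpos[OF s0] by (simp add: X0_def)
    have Xc: "X s = X0" if s: "s \<in> I" for s
    proof -
      have "q\<^sup>2 * X s = q\<^sup>2 * X0" using QX[OF s] QX[OF s0] hq[OF s] hq[OF s0] by (simp add: X0_def)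
      moreover have "q \<noteq> 0" using Qpos[OF s0] hq[OF s0] by simp
      ultimately show ?thesis by simp
    qed
    have knsign: "kn s * kn s0 > 0" if s: "s \<in> I" for s
    proof (rule ccontr)
      assume "\<not> kn s * kn s0 > 0"
      then have neg: "kn s * kn s0 < 0" using kn_nz[OF s] kn_nz[OF s0]
        by (metis linorder_neqE_linordered_idom mult_eq_0_iff)
      have "continuous_on I kn" using curv_diff(2) by (rule differentiable_imp_continuous_on)
      then have "connected (kn ` I)" using I(2) by (simp add: connected_continuous_image is_interval_connected)
      then have iv: "is_interval (kn ` I)" by (simp add: is_interval_connected_1)
      have "0 \<in> kn ` I"
      proof (cases "kn s < 0")
        case True
        then have "kn s0 > 0" using neg by (simp add: mult_less_0_iff)
        then show ?thesis using mem_is_interval_1_I[OF iv imageI[OF s] imageI[OF s0], of 0] True by auto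
      next
        case False
        then have "kn s > 0" "kn s0 < 0" using neg kn_nz[OF s] by (auto simp: mult_less_0_iff)
        then show ?thesis using mem_is_interval_1_I[OF iv imageI[OF s0] imageI[OF s], of 0] by auto
      qed
      then show False using kn_nz by auto
    qed
    define \<sigma> where "\<sigma> = sgn (kn s0)"
    have sig: "sgn (kn s) = \<sigma>" if s: "s \<in> I" for s
      using knsign[OF s] unfolding \<sigma>_def by (auto simp: zero_less_mult_iff sgn_if)
    have sig2: "\<sigma> * \<sigma> = 1" using kn_nz[OF s0] by (auto simp: \<sigma>_def sgn_if)
    define c where "c = 1 / sqrt (1 + X0)"
    define \<alpha> where "\<alpha> = \<sigma> * sqrt X0 / sqrt (1 + X0)"
    have cpos: "c > 0" using X0pos by (simp add: c_def)
    have ac1: "\<alpha>\<^sup>2 + c\<^sup>2 = 1"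
      using X0pos sig2 by (simp add: \<alpha>_def c_def power_divide power_mult_distrib power2_eq_square[of \<sigma>] field_simps)
    define n where "n t = norm (\<gamma> t)" for t
    have n2: "(n s)\<^sup>2 = (\<mu>1 s)\<^sup>2 + (\<mu>2 s)\<^sup>2" if s: "s \<in> I" for s
    proof -
      have "(n s)\<^sup>2 = \<gamma> s \<bullet> \<gamma> s" by (simp add: n_def power2_norm_eq_inner)
      also have "\<dots> = (\<mu>1 s)\<^sup>2 + (\<mu>2 s)\<^sup>2" using fr[OF s] position[OF s]
        by (simp add: inner_add_left inner_add_right power2_eq_square)
      finally show ?thesis .
    qed
    have npos: "n s > 0" if s: "s \<in> I" for s
    proof -
      have "(n s)\<^sup>2 > 0" using n2[OF s] m2nz[OF s] by (simp add: add_nonneg_pos)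
      then show ?thesis by (simp add: n_def)
    qed
    have keyid: "\<alpha> * (\<mu>2 s)\<^sup>2 = c * (kn s * (n s)^3)" if s: "s \<in> I" for s
    proof -
      have n2': "(n s)\<^sup>2 = (\<mu>2 s)\<^sup>2 * R s / (kn s)\<^sup>2"
        using n2[OF s] mu1[OF s] kn_nz[OF s] unfolding R_def by (simp add: field_simps power2_eq_square)
      define y where "y = kn s * (n s)^3"
      define x where "x = \<sigma> * sqrt X0 * (\<mu>2 s)\<^sup>2"
      have "y\<^sup>2 = (kn s)\<^sup>2 * ((n s)\<^sup>2)^3" by (simp add: y_def power_mult_distrib power_mult[symmetric] mult.commute)
      also have "\<dots> = (\<mu>2 s)^4 * X s"
        unfolding n2' X_def using kn_nz[OF s] by (simp add: field_simps eval_nat_numeral)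
      finally have y2: "y\<^sup>2 = (\<mu>2 s)^4 * X0" using Xc[OF s] by simp
      have s2: "\<sigma>\<^sup>2 = 1" using sig2 by (simp add: power2_eq_square)
      have x2: "x\<^sup>2 = (\<mu>2 s)^4 * X0" using X0pos s2
        by (simp add: x_def power_mult_distrib flip: power_mult)
      have "x = y \<or> x = - y" using x2 y2 power2_eq_iff[of x y] by simp
      moreover have "sgn y = \<sigma>" using sig[OF s] npos[OF s] by (simp add: y_def sgn_mult)
      moreover have "sgn x = \<sigma>"
      proof -
        have "sqrt X0 * (\<mu>2 s)\<^sup>2 > 0" using X0pos m2nz[OF s] by simp
        then have "sgn (sqrt X0 * (\<mu>2 s)\<^sup>2) = 1" by simp
        then show ?thesis unfolding x_def mult.assoc by (simp only: sgn_mult) (simp add: \<sigma>_def)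
      qed
      moreover have "\<sigma> \<noteq> 0" using sig2 by auto
      ultimately have "x = y" by auto
      then show ?thesis unfolding x_def y_def \<alpha>_def c_def by (simp add: field_simps)
    qed
    have dn: "(n has_real_derivative (\<mu>1 s / n s)) (at s)" if s: "s \<in> I" for s
    proof -
      have gg: "((\<lambda>t. \<gamma> t \<bullet> \<gamma> t) has_real_derivative (\<gamma> s \<bullet> T s + T s \<bullet> \<gamma> s)) (at s)"
        by (rule inner_vd[OF unit_speed(1)[OF s] unit_speed(1)[OF s]])
      have pos: "0 < \<gamma> s \<bullet> \<gamma> s" using npos[OF s] by (simp add: n_def)
      have "((\<lambda>t. sqrt (\<gamma> t \<bullet> \<gamma> t)) has_real_derivative inverse (sqrt (\<gamma> s \<bullet> \<gamma> s)) / 2 * (\<gamma> s \<bullet> T s + T s \<bullet> \<gamma> s)) (at s)"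
        by (rule DERIV_chain2[OF DERIV_real_sqrt[OF pos] gg])
      moreover have "(\<lambda>t. sqrt (\<gamma> t \<bullet> \<gamma> t)) = n" by (simp add: n_def norm_eq_sqrt_inner fun_eq_iff)
      moreover have "inverse (sqrt (\<gamma> s \<bullet> \<gamma> s)) / 2 * (\<gamma> s \<bullet> T s + T s \<bullet> \<gamma> s) = \<mu>1 s / n s"
        using gT[OF s] by (simp add: n_def norm_eq_sqrt_inner inner_commute field_simps)
      ultimately show ?thesis by simp
    qed
    define dfun where "dfun t = (\<alpha> / n t) *\<^sub>R \<gamma> t + c *\<^sub>R U t" for t
    have dzero: "(dfun has_vector_derivative 0) (at s)" if s: "s \<in> I" for s
    proof -
      have d1: "((\<lambda>t. (\<alpha> / n t) *\<^sub>R \<gamma> t) has_vector_derivative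
          ((\<alpha> / n s) *\<^sub>R T s + ((0 * n s - \<alpha> * (\<mu>1 s / n s)) / (n s * n s)) *\<^sub>R \<gamma> s)) (at s)"
        using npos[OF s] by (intro has_vector_derivative_scaleR DERIV_divide DERIV_const dn[OF s] unit_speed(1)[OF s]) auto
      have d2: "((\<lambda>t. c *\<^sub>R U t) has_vector_derivative (c *\<^sub>R (- kn s *\<^sub>R T s - \<tau>g s *\<^sub>R V s) + 0 *\<^sub>R U s)) (at s)"
        by (intro has_vector_derivative_scaleR DERIV_const dU[OF s])
      define cT where "cT = \<alpha> / n s + ((0 * n s - \<alpha> * (\<mu>1 s / n s)) / (n s * n s)) * \<mu>1 s - c * kn s"
      define cV where "cV = ((0 * n s - \<alpha> * (\<mu>1 s / n s)) / (n s * n s)) * \<mu>2 s - c * \<tau>g s"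
      have eq: "(\<alpha> / n s) *\<^sub>R T s + ((0 * n s - \<alpha> * (\<mu>1 s / n s)) / (n s * n s)) *\<^sub>R \<gamma> s
          + (c *\<^sub>R (- kn s *\<^sub>R T s - \<tau>g s *\<^sub>R V s) + 0 *\<^sub>R U s) = cT *\<^sub>R T s + cV *\<^sub>R V s"
        unfolding cT_def cV_def position[OF s] by (simp add: algebra_simps)
      have nn: "n s \<noteq> 0" using npos[OF s] by simp
      have k: "\<alpha> * (\<mu>2 s)\<^sup>2 = c * (kn s * (n s)^3)" by (rule keyid[OF s])
      have "cT * (n s)^3 = \<alpha> * ((n s)\<^sup>2 - (\<mu>1 s)\<^sup>2) - c * kn s * (n s)^3"
        unfolding cT_def using nn by (simp add: field_simps eval_nat_numeral)
      also have "\<dots> = 0" using n2[OF s] k by (simp add: algebra_simps)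
      finally have cT0: "cT = 0" using nn by simp
      have "cV * (n s)^3 * kn s = - \<alpha> * (kn s * \<mu>1 s) * \<mu>2 s - \<tau>g s * (c * (kn s * (n s)^3))"
        unfolding cV_def using nn by (simp add: field_simps eval_nat_numeral)
      also have "\<dots> = 0" unfolding k[symmetric] using E3[OF s]
        by (simp add: algebra_simps eq_neg_iff_add_eq_0[symmetric] power2_eq_square)
      finally have cV0: "cV = 0" using nn kn_nz[OF s] by simp
      show ?thesis using has_vector_derivative_add[OF d1 d2] unfolding eq cT0 cV0 dfun_def
        by simp
    qed
    obtain d0 where d0: "\<And>t. t \<in> I \<Longrightarrow> dfun t = d0"
    proof -
      have "(dfun has_vector_derivative 0) (at x within I)" if "x \<in> I" for x
        using dzero[OF that] by (rule has_vector_derivative_at_within)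
      then show ?thesis using has_vector_derivative_zero_constant[OF cvx, of dfun] that by blast
    qed
    have Ud: "U s \<bullet> d0 = c" if s: "s \<in> I" for s
      using d0[OF s, symmetric] fr[OF s] gU[OF s] by (simp add: dfun_def inner_add_right inner_commute)
    have "d0 \<bullet> d0 = 1"
    proof -
      have "d0 \<bullet> d0 = (\<alpha> / n s0)\<^sup>2 * (\<gamma> s0 \<bullet> \<gamma> s0) + c\<^sup>2"
        using d0[OF s0, symmetric] fr[OF s0] gU[OF s0]
        by (simp add: dfun_def inner_add_right inner_add_left inner_commute power2_eq_square)
      also have "\<gamma> s0 \<bullet> \<gamma> s0 = (n s0)\<^sup>2" by (simp add: n_def power2_norm_eq_inner)
      finally show ?thesis using npos[OF s0] ac1 by (simp add: power_divide)
    qed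
    then have nd0: "norm d0 = 1" by (simp add: norm_eq_1)
    have c1: "c \<le> 1" unfolding c_def using X0pos by (simp add: divide_le_eq)
    have "cos (arccos c) = c" using cpos c1 by (intro cos_arccos) auto
    then show "isophotic I U" unfolding isophotic_def using nd0 Ud by metis
  qed
qed

end
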